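(* Let $G$ be an $\alpha$-separable graph with $m$ edges and let $\mathcal{T}$ be a separator tree of $G$ of height $\eta=O(\log m)$ in which, for every non-leaf node $H$, the children of $H$ and the separator $S(H)$ come from a partition as in the definition of $\alpha$-separability (so $|S(H)|\le c\lceil|E(H)|^{\alpha}\rceil$). Let $\mathcal{H}$ be a set of $K$ nodes of $\mathcal{T}$. Then \[\sum_{H\in\mathcal{P}_{\mathcal{T}}(\mathcal{H})}\big(|\partial H|+|S(H)|\big)\le\widetilde{O}(K^{1-\alpha}m^{\alpha}).\]
   Context: A graph $G=(V,E)$ is $\alpha$-separable if there are constants $c>0$, $b\in(0,1)$ such that every nonempty subgraph $H$ of $G$ with $|E(H)|\ge2$ can be partitioned into $H_1,H_2$ with $E(H_1)\cup E(H_2)=E(H)$, $E(H_1)\cap E(H_2)=\emptyset$, $|V(H_1)\cap V(H_2)|\le c\lceil|E(H)|^{\alpha}\rceil$, and $|E(H_i)|\le b|E(H)|$ for $i=1,2$; $S(H)=V(H_1)\cap V(H_2)$. Separator tree: a rooted binary tree $\mathcal{T}$ whose nodes are regions (edge-induced subgraphs) $H$ of $G$, each storing vertex sets $\partial H$, $S(H)$, $F_H$, defined top-down: the root is $G$ with $\partial G=\emptyset$, $F_G=S(G)$; a non-leaf node $H$ has two children $D_1,D_2$ whose edge sets partition $E(H)$, with $V(D_1)\cap V(D_2)=S(H)$, $\partial D_j=(\partial H\cup S(H))\cap V(D_j)$, and $F_H=S(H)\setminus\partial H$; a node with constantly many edges is a leaf with $S(H)=\emptyset$ and $F_H=V(H)\setminus\partial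 H$. For a set $\mathcal{H}$ of nodes, $\mathcal{P}_{\mathcal{T}}(\mathcal{H})$ is the set of all nodes lying on a tree path from some $H\in\mathcal{H}$ to the root (including $H$ and the root). $\widetilde{O}$ hides polylogarithmic factors in $m$. *)

theory Defs
  imports Complex_Main "HOL-Library.Sublist"
begin

text \<open>Subgraphs/regions are represented by their edge sets; the vertex set
  of an edge-induced subgraph is the union of its edges.\<close>

definition verts :: "'v set set \<Rightarrow> 'v set" where
  "verts F = \<Union> F"

definition simple_graph :: "'v set set \<Rightarrow> bool" where
  "simple_graph E \<longleftrightarrow> finite E \<and> (\<forall>e\<in>E. card e = 2)"

definition separable_with :: "real \<Rightarrow> real \<Rightarrow> real \<Rightarrow> 'v set set \<Rightarrow> bool" where
  "separable_with \<alpha> c b E \<longleftrightarrow>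
     (\<forall>F \<subseteq> E. card F \<ge> 2 \<longrightarrow>
        (\<exists>F1 F2. F1 \<union> F2 = F \<and> F1 \<inter> F2 = {} \<and>
           real (card (verts F1 \<inter> verts F2)) \<le> c * real_of_int \<lceil>real (card F) powr \<alpha>\<rceil> \<and>
           real (card F1) \<le> b * real (card F) \<and> real (card F2) \<le> b * real (card F)))"

definition alpha_separable :: "real \<Rightarrow> 'v set set \<Rightarrow> bool" where
  "alpha_separable \<alpha> E \<longleftrightarrow> (\<exists>c b. c > 0 \<and> 0 < b \<and> b < 1 \<and> separable_with \<alpha> c b E)"

text \<open>Separator trees. A node stores its region (edge set) and, if it is an inner node,
  its separator S(H); leaves have S(H) = {}.\<close>
datatype 'v stree =
    Leaf "'v set set"
  | Node "'v set set" "'v set" "'v stree" "'v stree"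

fun region :: "'v stree \<Rightarrow> 'v set set" where
  "region (Leaf F) = F"
| "region (Node F S l r) = F"

fun sep :: "'v stree \<Rightarrow> 'v set" where
  "sep (Leaf F) = {}"
| "sep (Node F S l r) = S"

fun height :: "'v stree \<Rightarrow> nat" where
  "height (Leaf F) = 0"
| "height (Node F S l r) = Suc (max (height l) (height r))"

text \<open>Nodes of the tree are identified by their positions (paths from the root;
  False = first child, True = second child).\<close>
fun positions :: "'v stree \<Rightarrow> bool list set" where
  "positions (Leaf F) = {[]}"
| "positions (Node F S l r) = insert [] ((Cons False ` positions l) \<union> (Cons True ` positions r))"

fun subtree :: "'v stree \<Rightarrow> bool list \<Rightarrow> 'v stree" where
  "subtree t [] = t"
| "subtree (Node F S l r) (False # p) = subtree l p"
| "subtree (Node F S l r) (True # p) = subtree r p"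
| "subtree (Leaf F) (b # p) = Leaf {}"

text \<open>Boundary, computed top-down: bnd B t p is the boundary of the node at position p
  of t, when the root of t has boundary B.
  Child D_j of H gets boundary (boundary H \<union> S(H)) \<inter> V(D_j).\<close>
fun bnd :: "'v set \<Rightarrow> 'v stree \<Rightarrow> bool list \<Rightarrow> 'v set" where
  "bnd B t [] = B"
| "bnd B (Node F S l r) (False # p) = bnd ((B \<union> S) \<inter> verts (region l)) l p"
| "bnd B (Node F S l r) (True # p) = bnd ((B \<union> S) \<inter> verts (region r)) r p"
| "bnd B (Leaf F) (b # p) = {}"

definition boundary :: "'v stree \<Rightarrow> bool list \<Rightarrow> 'v set" where
  "boundary t p = bnd {} t p"

fun valid_splits :: "real \<Rightarrow> real \<Rightarrow> real \<Rightarrow> nat \<Rightarrow> 'v stree \<Rightarrow> bool" where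
  "valid_splits \<alpha> c b L (Leaf F) \<longleftrightarrow> card F \<le> L"
| "valid_splits \<alpha> c b L (Node F S l r) \<longleftrightarrow>
     region l \<union> region r = F \<and> region l \<inter> region r = {} \<and>
     verts (region l) \<inter> verts (region r) = S \<and>
     real (card S) \<le> c * real_of_int \<lceil>real (card F) powr \<alpha>\<rceil> \<and>
     real (card (region l)) \<le> b * real (card F) \<and>
     real (card (region r)) \<le> b * real (card F) \<and>
     valid_splits \<alpha> c b L l \<and> valid_splits \<alpha> c b L r"

definition separator_tree :: "real \<Rightarrow> real \<Rightarrow> real \<Rightarrow> nat \<Rightarrow> 'v set set \<Rightarrow> 'v stree \<Rightarrow> bool" where
  "separator_tree \<alpha> c b L E t \<longleftrightarrow> region t = E \<and> valid_splits \<alpha> c b L t"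

definition root_paths :: "bool list set \<Rightarrow> bool list set" where
  "root_paths Hs = {p. \<exists>q\<in>Hs. prefix p q}"

end

theory Submission
  imports Defs "HOL-Analysis.Convex"
begin


lemma holder_powr:
  fixes x :: "'a \<Rightarrow> real" and \<alpha> :: real
  assumes "finite I" "\<forall>i\<in>I. x i \<ge> 0" "0 < \<alpha>" "\<alpha> < 1"
  shows "(\<Sum>i\<in>I. x i powr \<alpha>) \<le> real (card I) powr (1-\<alpha>) * (\<Sum>i\<in>I. x i) powr \<alpha>"
proof (cases "(\<Sum>i\<in>I. x i) = 0")
  case True
  then have "\<forall>i\<in>I. x i = 0" using assms sum_nonneg_eq_0_iff by blast
  then show ?thesis by simp
next
  case False
  define S where "S = (\<Sum>i\<in>I. x i)"
  have Spos: "S > 0" using False assms unfolding S_def by (simp add: order_less_le sum_nonneg)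
  have Ine: "I \<noteq> {}" using False by auto
  define n where "n = real (card I)"
  have npos: "n > 0" using Ine assms(1) unfolding n_def by (simp add: card_gt_0_iff)
  define s where "s = S / n"
  have spos: "s > 0" using Spos npos s_def by simp
  have each: "x i powr \<alpha> * s powr (1-\<alpha>) \<le> \<alpha> * x i + (1-\<alpha>) * s" if "i \<in> I" for i
  proof (cases "x i = 0")
    case True then show ?thesis using spos assms by simp
  next
    case False
    then have "x i > 0" using assms that by force
    then show ?thesis using Youngs_inequality_0[of \<alpha> "1-\<alpha>" "x i" s] spos assms by simp
  qed
  have "(\<Sum>i\<in>I. x i powr \<alpha>) * s powr (1-\<alpha>) = (\<Sum>i\<in>I. x i powr \<alpha> * s powr (1-\<alpha>))"
    by (simp add: sum_distrib_right)
  also have "\<dots> \<le> (\<Sum>i\<in>I. \<alpha> * x i + (1-\<alpha>) * s)" using each by (rule sum_mono)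
  also have "\<dots> = \<alpha> * S + (1-\<alpha>) * s * n"
    by (simp add: sum.distrib sum_distrib_left S_def n_def)
  also have "\<dots> = S" using npos by (simp add: s_def field_simps)
  finally have A: "(\<Sum>i\<in>I. x i powr \<alpha>) * s powr (1-\<alpha>) \<le> S" .
  have "s powr (1-\<alpha>) = S powr (1-\<alpha>) / n powr (1-\<alpha>)"
    using Spos npos by (simp add: s_def powr_divide)
  have sp: "s powr (1-\<alpha>) > 0" using spos by simp
  have "(\<Sum>i\<in>I. x i powr \<alpha>) \<le> S / s powr (1-\<alpha>)" using A sp by (simp add: field_simps)
  also have "S / s powr (1-\<alpha>) = n powr (1-\<alpha>) * (S powr \<alpha> * S powr (1-\<alpha>)) / S powr (1-\<alpha>)"
    using Spos npos by (simp add: s_def powr_divide powr_add[symmetric])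
  also have "\<dots> = n powr (1-\<alpha>) * S powr \<alpha>" using Spos by simp
  finally show ?thesis unfolding n_def S_def .
qed



lemma finite_positions: "finite (positions t)"
  by (induction t) auto

lemma length_positions: "p \<in> positions t \<Longrightarrow> length p \<le> height t"
  by (induction t arbitrary: p) (auto simp: le_max_iff_disj)

lemma positions_prefix: "q \<in> positions t \<Longrightarrow> prefix p q \<Longrightarrow> p \<in> positions t"
proof (induction t arbitrary: p q)
  case (Leaf F) then show ?case by auto
next
  case (Node F S l r)
  show ?case
  proof (cases p)
    case Nil then show ?thesis by simp
  next
    case (Cons a p')
    with Node.prems obtain q' where q: "q = a # q'" "prefix p' q'"
      by (auto simp: prefix_Cons)
    then show ?thesis using Node Cons by (cases a) auto
  qed
qed

lemma valid_subtree: "valid_splits \<alpha> c b L t \<Longrightarrow> p \<in> positions t \<Longrightarrow> valid_splits \<alpha> c b L (subtree t p)"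
  by (induction t arbitrary: p) auto

lemma sum_split:
  fixes f :: "bool list \<Rightarrow> 'b::comm_monoid_add"
  assumes "finite Q"
  shows "sum f {p\<in>Q. P p} = (if [] \<in> Q \<and> P [] then f [] else 0)
     + sum (\<lambda>p. f (False#p)) {p. False#p \<in> Q \<and> P (False#p)}
     + sum (\<lambda>p. f (True#p)) {p. True#p \<in> Q \<and> P (True#p)}"
proof -
  let ?A = "{p. False#p \<in> Q \<and> P (False#p)}" and ?B = "{p. True#p \<in> Q \<and> P (True#p)}"
  let ?Z = "{p\<in>Q. P p \<and> p = []}"
  have fA: "finite ?A"
    by (rule finite_subset[OF _ finite_vimageI[OF assms, of "Cons False"]]) auto
  have fB: "finite ?B"
    by (rule finite_subset[OF _ finite_vimageI[OF assms, of "Cons True"]]) auto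
  have eq: "{p\<in>Q. P p} = ?Z \<union> (Cons False ` ?A \<union> Cons True ` ?B)"
  proof (rule set_eqI)
    fix p show "p \<in> {p\<in>Q. P p} \<longleftrightarrow> p \<in> ?Z \<union> (Cons False ` ?A \<union> Cons True ` ?B)"
    proof (cases p)
      case Nil then show ?thesis by auto
    next
      case (Cons a p')
      then show ?thesis by (cases a) auto
    qed
  qed
  have "sum f {p\<in>Q. P p} = sum f ?Z + sum f (Cons False ` ?A \<union> Cons True ` ?B)"
    unfolding eq using fA fB assms by (intro sum.union_disjoint) auto
  also have "sum f (Cons False ` ?A \<union> Cons True ` ?B) = sum f (Cons False ` ?A) + sum f (Cons True ` ?B)"
    using fA fB by (intro sum.union_disjoint) auto
  also have "sum f (Cons False ` ?A) = sum (\<lambda>p. f (False#p)) ?A"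
    by (subst sum.reindex) (auto simp: inj_on_def)
  also have "sum f (Cons True ` ?B) = sum (\<lambda>p. f (True#p)) ?B"
    by (subst sum.reindex) (auto simp: inj_on_def)
  also have "sum f ?Z = (if [] \<in> Q \<and> P [] then f [] else 0)"
  proof -
    have "?Z = (if [] \<in> Q \<and> P [] then {[]} else {})" by auto
    then show ?thesis by simp
  qed
  finally show ?thesis by (simp add: add.assoc)
qed


lemma sum_sub_nil:
  fixes f :: "'a list \<Rightarrow> nat"
  assumes "A \<subseteq> {[]}"
  shows "sum f A \<le> f []"
proof -
  have "sum f A \<le> sum f {[]}" using assms by (intro sum_mono2) auto
  then show ?thesis by simp
qed

lemma region_level:
  "valid_splits \<alpha> c b L t \<Longrightarrow> Q \<subseteq> positions t \<Longrightarrow>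
   (\<Sum>p\<in>{p\<in>Q. length p = d}. card (region (subtree t p))) \<le> card (region t)"
proof (induction t arbitrary: Q d)
  case (Leaf F)
  have "{p\<in>Q. length p = d} \<subseteq> {[]}" using Leaf by auto
  then have "(\<Sum>p\<in>{p\<in>Q. length p = d}. card (region (subtree (Leaf F) p))) \<le> card (region (subtree (Leaf F) []))"
    by (rule sum_sub_nil)
  then show ?case by simp
next
  case (Node F S l r)
  have fQ: "finite Q" using Node.prems finite_positions finite_subset by blast
  show ?case
  proof (cases d)
    case 0
    have "{p\<in>Q. length p = d} \<subseteq> {[]}" using 0 by auto
    then have "(\<Sum>p\<in>{p\<in>Q. length p = d}. card (region (subtree (Node F S l r) p))) \<le> card (region (subtree (Node F S l r) []))"
      by (rule sum_sub_nil)
    then show ?thesis by simp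
  next
    case (Suc d')
    have Ql: "{p. False#p \<in> Q} \<subseteq> positions l" and Qr: "{p. True#p \<in> Q} \<subseteq> positions r"
      using Node.prems by auto
    have IHl: "(\<Sum>p\<in>{p. False#p \<in> Q \<and> length p = d'}. card (region (subtree l p))) \<le> card (region l)"
      using Node.IH(1)[OF _ Ql, of d'] Node.prems by simp
    have IHr: "(\<Sum>p\<in>{p. True#p \<in> Q \<and> length p = d'}. card (region (subtree r p))) \<le> card (region r)"
      using Node.IH(2)[OF _ Qr, of d'] Node.prems by simp
    have cardF: "card (region l) + card (region r) \<le> card F"
    proof (cases "finite F")
      case True
      then have "card (region l) + card (region r) = card (region l \<union> region r)"
        using Node.prems by (intro card_Un_disjoint[symmetric]) (auto intro: finite_subset)
      then show ?thesis using Node.prems by simp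
    next
      case False
      then show ?thesis using Node.prems by simp
    qed
    have L: "(\<Sum>p\<in>{p\<in>Q. length p = d}. card (region (subtree (Node F S l r) p))) =
          (\<Sum>p\<in>{p. False#p \<in> Q \<and> length p = d'}. card (region (subtree l p))) +
          (\<Sum>p\<in>{p. True#p \<in> Q \<and> length p = d'}. card (region (subtree r p)))"
      using sum_split[OF fQ, of "\<lambda>p. card (region (subtree (Node F S l r) p))" "\<lambda>p. length p = d"] Suc
      by simp
    show ?thesis unfolding L region.simps using IHl IHr cardF by linarith
  qed
qed



lemma card_two_le:
  assumes "finite B" "finite S" "Bl \<subseteq> B \<union> S" "Br \<subseteq> B \<union> S" "Bl \<inter> Br \<subseteq> S"
  shows "card Bl + card Br \<le> card B + 2 * card S"
proof -
  have f: "finite Bl" "finite Br" using assms finite_subset by blast+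
  have "card Bl + card Br = card (Bl \<union> Br) + card (Bl \<inter> Br)" by (rule card_Un_Int[OF f])
  also have "card (Bl \<union> Br) \<le> card (B \<union> S)" using assms by (intro card_mono) auto
  also have "card (B \<union> S) \<le> card B + card S" by (rule card_Un_le)
  also have "card (Bl \<inter> Br) \<le> card S" using assms by (intro card_mono) auto
  finally show ?thesis by simp
qed

lemma bnd_level:
  "valid_splits \<alpha> c b L t \<Longrightarrow> finite (verts (region t)) \<Longrightarrow> finite B \<Longrightarrow> Q \<subseteq> positions t \<Longrightarrow>
   (\<forall>p\<in>Q. \<forall>q. prefix q p \<longrightarrow> q \<in> Q) \<Longrightarrow>
   (\<Sum>p\<in>{p\<in>Q. length p = d}. card (bnd B t p)) \<le> card B + 2 * (\<Sum>p\<in>{p\<in>Q. length p < d}. card (sep (subtree t p)))"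
proof (induction t arbitrary: Q d B)
  case (Leaf F)
  have "{p\<in>Q. length p = d} \<subseteq> {[]}" using Leaf by auto
  then have "(\<Sum>p\<in>{p\<in>Q. length p = d}. card (bnd B (Leaf F) p)) \<le> card (bnd B (Leaf F) [])"
    by (rule sum_sub_nil)
  then show ?case by simp
next
  case (Node F S l r)
  have fQ: "finite Q" using Node.prems finite_positions finite_subset by blast
  show ?case
  proof (cases "[] \<in> Q")
    case False
    then have "Q = {}" using Node.prems(5) by auto
    then show ?thesis by simp
  next
    case True
    show ?thesis
    proof (cases d)
      case 0
      have "{p\<in>Q. length p = d} \<subseteq> {[]}" using 0 by auto
      then have "(\<Sum>p\<in>{p\<in>Q. length p = d}. card (bnd B (Node F S l r) p)) \<le> card (bnd B (Node F S l r) [])"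
        by (rule sum_sub_nil)
      then show ?thesis by simp
    next
      case (Suc d')
      define Bl where "Bl = (B \<union> S) \<inter> verts (region l)"
      define Br where "Br = (B \<union> S) \<inter> verts (region r)"
      have vF: "verts (region l) \<subseteq> verts F" "verts (region r) \<subseteq> verts F"
        using Node.prems(1) unfolding verts_def by auto
      have fl: "finite (verts (region l))" "finite (verts (region r))"
        using vF Node.prems(2) finite_subset by auto
      have fS: "finite S" using Node.prems(1) fl by auto
      have fBl: "finite Bl" "finite Br" unfolding Bl_def Br_def using fl by auto
      have Ql: "{p. False#p \<in> Q} \<subseteq> positions l" and Qr: "{p. True#p \<in> Q} \<subseteq> positions r"
        using Node.prems by auto
      have cl: "\<forall>p\<in>{p. False#p \<in> Q}. \<forall>q. prefix q p \<longrightarrow> q \<in> {p. False#p \<in> Q}"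
        using Node.prems(5) by (auto simp: Cons_prefix_Cons)
      have cr: "\<forall>p\<in>{p. True#p \<in> Q}. \<forall>q. prefix q p \<longrightarrow> q \<in> {p. True#p \<in> Q}"
        using Node.prems(5) by (auto simp: Cons_prefix_Cons)
      have IHl: "(\<Sum>p\<in>{p. False#p \<in> Q \<and> length p = d'}. card (bnd Bl l p))
          \<le> card Bl + 2 * (\<Sum>p\<in>{p. False#p \<in> Q \<and> length p < d'}. card (sep (subtree l p)))"
        using Node.IH(1)[OF _ fl(1) fBl(1) Ql cl, of d'] Node.prems by simp
      have IHr: "(\<Sum>p\<in>{p. True#p \<in> Q \<and> length p = d'}. card (bnd Br r p))
          \<le> card Br + 2 * (\<Sum>p\<in>{p. True#p \<in> Q \<and> length p < d'}. card (sep (subtree r p)))"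
        using Node.IH(2)[OF _ fl(2) fBl(2) Qr cr, of d'] Node.prems by simp
      have two: "card Bl + card Br \<le> card B + 2 * card S"
        using Node.prems(1) Node.prems(3) fS unfolding Bl_def Br_def
        by (intro card_two_le) auto
      have L: "(\<Sum>p\<in>{p\<in>Q. length p = d}. card (bnd B (Node F S l r) p)) =
          (\<Sum>p\<in>{p. False#p \<in> Q \<and> length p = d'}. card (bnd Bl l p)) +
          (\<Sum>p\<in>{p. True#p \<in> Q \<and> length p = d'}. card (bnd Br r p))"
        using sum_split[OF fQ, of "\<lambda>p. card (bnd B (Node F S l r) p)" "\<lambda>p. length p = d"] Suc
        by (simp add: Bl_def Br_def)
      have R: "(\<Sum>p\<in>{p\<in>Q. length p < d}. card (sep (subtree (Node F S l r) p))) =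
          card S + (\<Sum>p\<in>{p. False#p \<in> Q \<and> length p < d'}. card (sep (subtree l p))) +
          (\<Sum>p\<in>{p. True#p \<in> Q \<and> length p < d'}. card (sep (subtree r p)))"
        using sum_split[OF fQ, of "\<lambda>p. card (sep (subtree (Node F S l r) p))" "\<lambda>p. length p < d"] Suc True
        by simp
      show ?thesis unfolding L R distrib_left using IHl IHr two by linarith
    qed
  qed
qed



lemma sep_bound:
  assumes "valid_splits \<alpha> c b L t" "0 < \<alpha>" "c > 0"
  shows "real (card (sep t)) \<le> 2*c * real (card (region t)) powr \<alpha>"
proof (cases t)
  case (Leaf F) then show ?thesis using assms by simp
next
  case (Node F S l r)
  have A: "real (card S) \<le> c * real_of_int \<lceil>real (card F) powr \<alpha>\<rceil>" using assms Node by simp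
  show ?thesis
  proof (cases "card F = 0")
    case True then show ?thesis using A Node by simp
  next
    case False
    then have x1: "real (card F) powr \<alpha> \<ge> 1" using assms by (intro ge_one_powr_ge_zero) auto
    have "real_of_int \<lceil>real (card F) powr \<alpha>\<rceil> \<le> real (card F) powr \<alpha> + 1" by linarith
    also have "\<dots> \<le> 2 * real (card F) powr \<alpha>" using x1 by simp
    finally have "c * real_of_int \<lceil>real (card F) powr \<alpha>\<rceil> \<le> c * (2 * real (card F) powr \<alpha>)"
      using assms by (intro mult_left_mono) auto
    then show ?thesis using A Node by simp
  qed
qed


theorem mainTheorem6:
  fixes \<alpha> c b C\<^sub>\<eta> :: real and L :: nat
  assumes "0 < \<alpha>" "\<alpha> < 1" "c > 0" "0 < b" "b < 1" "C\<^sub>\<eta> > 0"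
  shows "\<exists>C k. \<forall>(E :: nat set set) t Hs.
     simple_graph E \<and> separable_with \<alpha> c b E \<and>
     separator_tree \<alpha> c b L E t \<and>
     real (height t) \<le> C\<^sub>\<eta> * ln (real (card E) + 2) \<and>
     Hs \<subseteq> positions t
     \<longrightarrow> real (\<Sum>p\<in>root_paths Hs. card (boundary t p) + card (sep (subtree t p)))
         \<le> C * real (card Hs) powr (1 - \<alpha>) * real (card E) powr \<alpha> * ln (real (card E) + 2) ^ k"
proof -
  define A where "A = C\<^sub>\<eta> + 1 / ln 2"
  have "ln 2 > (0::real)" by simp
  then have Apos: "A > 0" using assms(6) unfolding A_def by (simp add: add_pos_pos)
  show ?thesis
  proof (intro exI allI impI)
    fix E :: "nat set set" and t Hs
    assume H: "simple_graph E \<and> separable_with \<alpha> c b E \<and>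
     separator_tree \<alpha> c b L E t \<and>
     real (height t) \<le> C\<^sub>\<eta> * ln (real (card E) + 2) \<and>
     Hs \<subseteq> positions t"
    define P where "P = root_paths Hs"
    define m where "m = real (card E)"
    define K where "K = real (card Hs)"
    define h where "h = height t"
    define \<Lambda> where "\<Lambda> = ln (real (card E) + 2)"
    define X where "X = 2 * c * K powr (1-\<alpha>) * m powr \<alpha>"
    have valid: "valid_splits \<alpha> c b L t" and regt: "region t = E"
      using H unfolding separator_tree_def by auto
    have fE: "finite (verts E)"
    proof -
      have "finite E" "\<forall>e\<in>E. card e = 2" using H unfolding simple_graph_def by auto
      then show ?thesis unfolding verts_def
        by (metis finite_Union card.infinite zero_neq_numeral)
    qed
    have fHs: "finite Hs" using H finite_positions finite_subset by blast
    have Ppos: "P \<subseteq> positions t" using H positions_prefix unfolding P_def root_paths_def by blast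
    have fP: "finite P" using Ppos finite_positions finite_subset by blast
    have Pcl: "\<forall>p\<in>P. \<forall>q. prefix q p \<longrightarrow> q \<in> P"
      unfolding P_def root_paths_def by (auto intro: prefix_order.trans)
    have Plen: "length ` P \<subseteq> {..h}" using Ppos length_positions unfolding h_def by auto
    have cardPd: "real (card {p\<in>P. length p = d}) \<le> K" for d
    proof -
      have "{p\<in>P. length p = d} \<subseteq> (\<lambda>q. take d q) ` Hs"
      proof
        fix p assume "p \<in> {p\<in>P. length p = d}"
        then obtain q where "q \<in> Hs" "prefix p q" "length p = d" unfolding P_def root_paths_def by auto
        then show "p \<in> (\<lambda>q. take d q) ` Hs" by (auto simp: prefix_def intro!: image_eqI)
      qed
      then have "card {p\<in>P. length p = d} \<le> card ((\<lambda>q. take d q) ` Hs)"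
        using fHs by (intro card_mono) auto
      also have "\<dots> \<le> card Hs" using card_image_le fHs by blast
      finally show ?thesis unfolding K_def by simp
    qed
    have K0: "K \<ge> 0" "m \<ge> 0" unfolding K_def m_def by auto
    have X0: "X \<ge> 0" unfolding X_def using assms by simp
    have seplev: "(\<Sum>p\<in>{p\<in>P. length p = d}. real (card (sep (subtree t p)))) \<le> X" for d
    proof -
      let ?Pd = "{p\<in>P. length p = d}"
      have fPd: "finite ?Pd" using fP by auto
      have "(\<Sum>p\<in>?Pd. real (card (sep (subtree t p)))) \<le> (\<Sum>p\<in>?Pd. 2*c * real (card (region (subtree t p))) powr \<alpha>)"
        using sep_bound valid_subtree valid Ppos assms by (intro sum_mono) blast
      also have "\<dots> = 2*c * (\<Sum>p\<in>?Pd. real (card (region (subtree t p))) powr \<alpha>)"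
        by (simp add: sum_distrib_left)
      also have "(\<Sum>p\<in>?Pd. real (card (region (subtree t p))) powr \<alpha>) \<le>
          real (card ?Pd) powr (1-\<alpha>) * (\<Sum>p\<in>?Pd. real (card (region (subtree t p)))) powr \<alpha>"
        using holder_powr[OF fPd] assms by simp
      also have "\<dots> \<le> K powr (1-\<alpha>) * m powr \<alpha>"
      proof (rule mult_mono)
        show "real (card ?Pd) powr (1-\<alpha>) \<le> K powr (1-\<alpha>)"
          using cardPd assms by (intro powr_mono2) auto
        have "(\<Sum>p\<in>?Pd. real (card (region (subtree t p)))) = real (\<Sum>p\<in>?Pd. card (region (subtree t p)))"
          by simp
        also have "\<dots> \<le> m" using region_level[OF valid Ppos, of d] regt unfolding m_def
          by (metis (no_types, lifting) Collect_cong of_nat_le_iff)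
        finally show "(\<Sum>p\<in>?Pd. real (card (region (subtree t p)))) powr \<alpha> \<le> m powr \<alpha>"
          using assms by (intro powr_mono2) (auto intro: sum_nonneg)
      qed (auto)
      finally show ?thesis unfolding X_def using assms by (simp add: mult_left_mono mult.assoc)
    qed
    define ST where "ST = (\<Sum>p\<in>P. real (card (sep (subtree t p))))"
    have ST: "ST \<le> (h+1) * X"
    proof -
      have "ST = (\<Sum>d\<in>{..h}. \<Sum>p\<in>{p\<in>P. length p = d}. real (card (sep (subtree t p))))"
        unfolding ST_def by (simp add: sum.group[OF fP finite_atMost Plen])
      also have "\<dots> \<le> (\<Sum>d\<in>{..h}. X)" using seplev by (intro sum_mono) auto
      finally show ?thesis by simp
    qed
    have ST0: "ST \<ge> 0" unfolding ST_def by (simp add: sum_nonneg)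
    have bndlev: "(\<Sum>p\<in>{p\<in>P. length p = d}. real (card (boundary t p))) \<le> 2 * ST" for d
    proof -
      have "(\<Sum>p\<in>{p\<in>P. length p = d}. card (bnd {} t p)) \<le> card ({}::nat set) + 2 * (\<Sum>p\<in>{p\<in>P. length p < d}. card (sep (subtree t p)))"
        using bnd_level[OF valid _ _ Ppos Pcl, of "{}" d] fE regt by simp
      then have "real (\<Sum>p\<in>{p\<in>P. length p = d}. card (boundary t p)) \<le> 2 * real (\<Sum>p\<in>{p\<in>P. length p < d}. card (sep (subtree t p)))"
        unfolding boundary_def by (metis (no_types, lifting) add_0 card.empty of_nat_le_iff of_nat_mult of_nat_numeral)
      also have "real (\<Sum>p\<in>{p\<in>P. length p < d}. card (sep (subtree t p))) \<le> ST"
        unfolding ST_def of_nat_sum using fP by (intro sum_mono2) auto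
      finally show ?thesis by simp
    qed
    have BT: "(\<Sum>p\<in>P. real (card (boundary t p))) \<le> (h+1) * (2 * ST)"
    proof -
      have "(\<Sum>p\<in>P. real (card (boundary t p))) = (\<Sum>d\<in>{..h}. \<Sum>p\<in>{p\<in>P. length p = d}. real (card (boundary t p)))"
        by (simp add: sum.group[OF fP finite_atMost Plen])
      also have "\<dots> \<le> (\<Sum>d\<in>{..h}. 2 * ST)" using bndlev by (intro sum_mono) auto
      finally show ?thesis by simp
    qed
    have total: "real (\<Sum>p\<in>P. card (boundary t p) + card (sep (subtree t p))) \<le> (3 * (real h+1)) * ((real h+1) * X)"
    proof -
      have "real (\<Sum>p\<in>P. card (boundary t p) + card (sep (subtree t p))) = (\<Sum>p\<in>P. real (card (boundary t p))) + ST"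
        unfolding ST_def by (simp add: sum.distrib)
      also have "\<dots> \<le> (real h+1) * (2 * ST) + ST" using BT by (simp add: add.commute)
      also have "\<dots> \<le> 3 * (real h + 1) * ST" using ST0 by (simp add: algebra_simps)
      also have "\<dots> \<le> 3 * (real h + 1) * ((real h + 1) * X)" using ST by (intro mult_left_mono) (auto simp: add.commute)
      finally show ?thesis by simp
    qed
    have L2: "\<Lambda> \<ge> ln 2" unfolding \<Lambda>_def by simp
    have ln2: "ln 2 > (0::real)" by simp
    have hA: "real h + 1 \<le> A * \<Lambda>"
    proof -
      have a: "1 \<le> \<Lambda> / ln 2" using L2 ln2 by simp
      have b: "real h \<le> C\<^sub>\<eta> * \<Lambda>" using H unfolding h_def \<Lambda>_def by simp
      have "A * \<Lambda> = C\<^sub>\<eta> * \<Lambda> + \<Lambda> / ln 2" unfolding A_def by (simp add: distrib_right)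
      then show ?thesis using a b by linarith
    qed
    have "(3 * (real h+1)) * ((real h+1) * X) \<le> (3 * (A * \<Lambda>)) * ((A * \<Lambda>) * X)"
      using hA X0 by (intro mult_mono) auto
    also have "\<dots> = (6 * c * A^2) * K powr (1-\<alpha>) * m powr \<alpha> * \<Lambda>^2"
      unfolding X_def by (simp add: power2_eq_square algebra_simps)
    finally show "real (\<Sum>p\<in>root_paths Hs. card (boundary t p) + card (sep (subtree t p)))
         \<le> (6 * c * A^2) * real (card Hs) powr (1 - \<alpha>) * real (card E) powr \<alpha> * ln (real (card E) + 2) ^ 2"
      using total unfolding P_def K_def m_def \<Lambda>_def by simp
  qed
qed

end
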